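(* Let $C$ be an $n$-dimensional tree or dual tree and let $F_C:V_0(C)\to V_1(C)$ be a non-zero associated map of bidegree $(n,p)$ satisfying the naturality rule, the filtration rule and the duality rule. If $p=2n$, then $F_C$ agrees with the Sarkar–Seed–Szabo formula: for a tree with starting circles $x_1,\dots,x_{n+1}$ and ending circle $y$, $F_C(x_1\cdots x_{n+1})=y$ and $F_C$ vanishes on all other monomials; for a dual tree with starting circle $x$ and ending circles $y_1,\dots,y_{n+1}$, $F_C(1)=1\otimes\cdots\otimes1$ and $F_C(x)=0$. If $p>2n$, then $F_C$ must be zero (i.e. no such non-zero map exists).
   Context: An $n$-dimensional resolution configuration $C$ is a finite set of pairwise disjoint embedded circles in $S^2$ (the starting circles) together with $n$ pairwise disjoint embedded arcs whose endpoints lie on the circles and whose interiors are disjoint from the circles. The ending circles are obtained by surgery along all arcs. The dual configuration $C^*$ consists of the ending circles with dual arcs obtained by rotating each arc $90$ degrees counterclockwise; the mirror $m(C)$ is the reflection of $C$ in $\mathbb{R}\times\{0\}\subset\mathbb{R}^2\cup\{\infty\}=S^2$. $C$ is connected if the graph with vertices the circles and edges the arcs is connected. A connected $n$-dimensional configuration is a tree if it has exactly $n+1$ starting circles and one ending circle; a dual tree is the dual of a tree. $V_0(C)=\bigotimes_i\mathbb{F}_2[x_i]/(x_i^2)$ over starting circles $x_i$, $V_1(C)=\bigotimes_j\mathbb{F}_2[y_j]/(y_j^2)$ over ending circles $y_j$, with bases of monomials. Quantum grading: in each factor $\mathrm{gr}_q(1)=1$, $\mathrm{gr}_q(z)=-1$,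 summed over factors, and for an $n$-dimensional configuration monomials of $V_1(C)$ get an extra shift of $+n$. A linear map $F_C$ has bidegree $(n,p)$ if it sends each monomial to a combination of monomials with quantum grading larger by $p$. Rules: (Naturality) if an orientation-preserving diffeomorphism of $S^2$ sends $C$ to $C'$, then $F_C=F_{C'}$ under the induced identifications. (Duality) with canonical identifications $V_0(m(C^* ))=V_1(C)$, $V_1(m(C^* ))=V_0(C)$, and $a\mapsto a^*$ the map on monomials induced by $1^*=z$, $z^*=1$ in each factor, the coefficient of $b$ in $F_C(a)$ equals the coefficient of $a^*$ in $F_{m(C^* )}(b^* )$ for all monomials $a\in V_0(C)$, $b\in V_1(C)$. (Filtration) for a point $P$ on the starting circles, with $x(P)$, $y(P)$ the starting and ending circles containing $P$: if monomial $a$ is divisible by $x(P)$ and the coefficient of monomial $b$ in $F_C(a)$ is non-zero, then $y(P)$ divides $b$. *)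

theory Defs
  imports Main
begin

text \<open>
Combinatorial model of a connected resolution configuration in S^2 with n \<ge> 1 arcs.
Contract every arc to a 4-valent vertex; the result is a connected 4-valent graph
cellularly embedded in S^2, i.e. a planar combinatorial map:
  darts D, edge involution alph (edges = segments of the starting circles between
  arc endpoints), vertex rotation sig (counterclockwise cyclic order of the 4 darts
  at a vertex = at an arc), and a marker mrk pairing each dart with the adjacent
  dart at its vertex with which it forms a strand of a starting circle (0-resolution).
  Ending circles use the other adjacent pairing (1-resolution = surgery).
\<close>

record rc =
  darts :: "nat set"
  alph  :: "nat \<Rightarrow> nat"
  sig   :: "nat \<Rightarrow> nat"
  mrk   :: "nat \<Rightarrow> nat"

definition step_rel :: "nat set \<Rightarrow> (nat \<Rightarrow> nat) \<Rightarrow> (nat \<times> nat) set" where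
  "step_rel D f = {(x, f x) | x. x \<in> D}"

definition orb :: "nat set \<Rightarrow> (nat \<Rightarrow> nat) \<Rightarrow> nat \<Rightarrow> nat set" where
  "orb D f d = {e. (d, e) \<in> (step_rel D f)\<^sup>*}"

definition orbs :: "nat set \<Rightarrow> (nat \<Rightarrow> nat) \<Rightarrow> nat set set" where
  "orbs D f = orb D f ` D"

definition mrk' :: "rc \<Rightarrow> nat \<Rightarrow> nat" where
  "mrk' C d = (if mrk C d = sig C d then sig C (sig C (sig C d)) else sig C d)"

definition rc_wf :: "rc \<Rightarrow> bool" where
  "rc_wf C \<longleftrightarrow> finite (darts C) \<and>
     (\<forall>d\<in>darts C. alph C d \<in> darts C \<and> alph C d \<noteq> d \<and> alph C (alph C d) = d) \<and>
     (\<forall>d\<in>darts C. sig C d \<in> darts C) \<and> inj_on (sig C) (darts C) \<and>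
     (\<forall>d\<in>darts C. sig C (sig C (sig C (sig C d))) = d \<and> sig C (sig C d) \<noteq> d) \<and>
     (\<forall>d\<in>darts C. (mrk C d = sig C d \<or> sig C (mrk C d) = d) \<and>
        mrk C (mrk C d) = d \<and> mrk C (sig C (sig C d)) = sig C (sig C (mrk C d)))"

definition rc_connected :: "rc \<Rightarrow> bool" where
  "rc_connected C \<longleftrightarrow> (\<forall>d\<in>darts C. \<forall>e\<in>darts C.
     (d, e) \<in> (step_rel (darts C) (alph C) \<union> step_rel (darts C) (sig C))\<^sup>*)"

text \<open>genus 0 (Euler: V - E + F = 2) i.e. the map lives in S^2\<close>
definition rc_planar :: "rc \<Rightarrow> bool" where
  "rc_planar C \<longleftrightarrow>
     card (orbs (darts C) (sig C \<circ> alph C)) + card (orbs (darts C) (sig C))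
       = card (orbs (darts C) (alph C)) + 2"

definition rc_conf :: "rc \<Rightarrow> bool" where
  "rc_conf C \<longleftrightarrow> rc_wf C \<and> rc_connected C \<and> rc_planar C"

text \<open>number of arcs = dimension\<close>
definition dim :: "rc \<Rightarrow> nat" where
  "dim C = card (darts C) div 4"

text \<open>circles are represented as the sets of darts lying on them\<close>
definition start_circle :: "rc \<Rightarrow> nat \<Rightarrow> nat set" where
  "start_circle C d = {e. (d, e) \<in> (step_rel (darts C) (alph C) \<union> step_rel (darts C) (mrk C))\<^sup>*}"

definition end_circle :: "rc \<Rightarrow> nat \<Rightarrow> nat set" where
  "end_circle C d = {e. (d, e) \<in> (step_rel (darts C) (alph C) \<union> step_rel (darts C) (mrk' C))\<^sup>*}"

definition start_circles :: "rc \<Rightarrow> nat set set" where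
  "start_circles C = start_circle C ` darts C"

definition end_circles :: "rc \<Rightarrow> nat set set" where
  "end_circles C = end_circle C ` darts C"

text \<open>dual configuration C^* (swap 0- and 1-resolution) and mirror m(C) (reverse orientation)\<close>
definition rc_dual :: "rc \<Rightarrow> rc" where
  "rc_dual C = C\<lparr>mrk := mrk' C\<rparr>"

definition rc_mirror :: "rc \<Rightarrow> rc" where
  "rc_mirror C = C\<lparr>sig := (\<lambda>d. sig C (sig C (sig C d)))\<rparr>"

definition is_tree :: "rc \<Rightarrow> bool" where
  "is_tree C \<longleftrightarrow> rc_conf C \<and> card (start_circles C) = dim C + 1 \<and> card (end_circles C) = 1"

definition is_dual_tree :: "rc \<Rightarrow> bool" where
  "is_dual_tree C \<longleftrightarrow> rc_conf C \<and> is_tree (rc_dual C)"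

text \<open>
A monomial of V_0(C) is a set a of starting circles (the product of the x_i, i in a);
a monomial of V_1(C) is a set b of ending circles. An F_2-linear map F_C is given by
its matrix: F C a b is the coefficient of b in F_C(a).
\<close>
type_synonym assoc_maps = "rc \<Rightarrow> nat set set \<Rightarrow> nat set set \<Rightarrow> bool"

definition gr0 :: "rc \<Rightarrow> nat set set \<Rightarrow> int" where
  "gr0 C a = int (card (start_circles C)) - 2 * int (card a)"

definition gr1 :: "rc \<Rightarrow> nat set set \<Rightarrow> int" where
  "gr1 C b = int (card (end_circles C)) - 2 * int (card b) + int (dim C)"

definition has_bidegree :: "assoc_maps \<Rightarrow> rc \<Rightarrow> int \<Rightarrow> bool" where
  "has_bidegree F C p \<longleftrightarrow> (\<forall>a \<subseteq> start_circles C. \<forall>b \<subseteq> end_circles C.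
      F C a b \<longrightarrow> gr1 C b = gr0 C a + p)"

definition nonzero_map :: "assoc_maps \<Rightarrow> rc \<Rightarrow> bool" where
  "nonzero_map F C \<longleftrightarrow> (\<exists>a \<subseteq> start_circles C. \<exists>b \<subseteq> end_circles C. F C a b)"

text \<open>isomorphism = orientation preserving diffeomorphism of S^2 carrying C to C'\<close>
definition rc_iso :: "(nat \<Rightarrow> nat) \<Rightarrow> rc \<Rightarrow> rc \<Rightarrow> bool" where
  "rc_iso \<phi> C C' \<longleftrightarrow> bij_betw \<phi> (darts C) (darts C') \<and>
     (\<forall>d\<in>darts C. \<phi> (alph C d) = alph C' (\<phi> d) \<and> \<phi> (sig C d) = sig C' (\<phi> d) \<and>
        \<phi> (mrk C d) = mrk C' (\<phi> d))"

definition cimg :: "(nat \<Rightarrow> nat) \<Rightarrow> nat set set \<Rightarrow> nat set set" where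
  "cimg \<phi> a = (\<lambda>c. \<phi> ` c) ` a"

definition naturality :: "assoc_maps \<Rightarrow> rc \<Rightarrow> bool" where
  "naturality F C \<longleftrightarrow> (\<forall>C' \<phi>. rc_conf C' \<and> rc_iso \<phi> C C' \<longrightarrow>
     (\<forall>a \<subseteq> start_circles C. \<forall>b \<subseteq> end_circles C. F C a b = F C' (cimg \<phi> a) (cimg \<phi> b)))"

text \<open>points P on starting circles (away from the arcs) lie on a segment = edge {d, alph d};
  x(P) = start_circle C d, y(P) = end_circle C d\<close>
definition filtration :: "assoc_maps \<Rightarrow> rc \<Rightarrow> bool" where
  "filtration F C \<longleftrightarrow> (\<forall>d\<in>darts C. \<forall>a \<subseteq> start_circles C. \<forall>b \<subseteq> end_circles C.
      start_circle C d \<in> a \<and> F C a b \<longrightarrow> end_circle C d \<in> b)"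

text \<open>V_0(m(C^*)) = V_1(C), V_1(m(C^*)) = V_0(C) literally (same dart sets);
  the star of a monomial is the complementary set of circles\<close>
definition duality :: "assoc_maps \<Rightarrow> rc \<Rightarrow> bool" where
  "duality F C \<longleftrightarrow> (\<forall>a \<subseteq> start_circles C. \<forall>b \<subseteq> end_circles C.
      F C a b = F (rc_mirror (rc_dual C)) (end_circles C - b) (start_circles C - a))"

end

theory Submission
  imports Defs
begin

lemma dim_pos:
  assumes "rc_wf C" "darts C \<noteq> {}"
  shows "dim C \<ge> 1"
proof -
  obtain d where d: "d \<in> darts C" using assms(2) by blast
  let ?s = "sig C"
  have fin: "finite (darts C)" using assms(1) by (simp add: rc_wf_def)
  have inj: "inj_on ?s (darts C)" using assms(1) by (simp add: rc_wf_def)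
  have cl: "\<And>x. x \<in> darts C \<Longrightarrow> ?s x \<in> darts C" using assms(1) by (simp add: rc_wf_def)
  have o4: "\<And>x. x \<in> darts C \<Longrightarrow> ?s (?s (?s (?s x))) = x \<and> ?s (?s x) \<noteq> x"
    using assms(1) by (simp add: rc_wf_def)
  have d1: "?s d \<in> darts C" "?s (?s d) \<in> darts C" "?s (?s (?s d)) \<in> darts C"
    using cl d by auto
  have n1: "?s d \<noteq> d" using o4[OF d] by metis
  have n2: "?s (?s d) \<noteq> d" using o4[OF d] by metis
  have n3: "?s (?s (?s d)) \<noteq> d" using o4[OF d] n1 by metis
  have n4: "?s (?s d) \<noteq> ?s d" using inj d d1 n1 by (metis inj_on_def)
  have n5: "?s (?s (?s d)) \<noteq> ?s d" using inj d d1 n2 by (metis inj_on_def)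
  have n6: "?s (?s (?s d)) \<noteq> ?s (?s d)" using inj d d1 n4 by (metis inj_on_def)
  have sub: "{d, ?s d, ?s (?s d), ?s (?s (?s d))} \<subseteq> darts C" using d d1 by auto
  have "card {d, ?s d, ?s (?s d), ?s (?s (?s d))} = 4"
    using n1 n2 n3 n4 n5 n6 by auto
  hence "card (darts C) \<ge> 4" using card_mono[OF fin sub] by simp
  thus ?thesis unfolding dim_def by simp
qed

lemma fin_start: "rc_wf C \<Longrightarrow> finite (start_circles C)"
  by (simp add: rc_wf_def start_circles_def)

lemma fin_end: "rc_wf C \<Longrightarrow> finite (end_circles C)"
  by (simp add: rc_wf_def end_circles_def)

lemma mrk'_dual:
  assumes "rc_wf C" "d \<in> darts C"
  shows "mrk' (rc_dual C) d = mrk C d"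
proof -
  let ?s = "sig C"
  have o4: "?s (?s (?s (?s d))) = d \<and> ?s (?s d) \<noteq> d" using assms by (simp add: rc_wf_def)
  have m: "mrk C d = ?s d \<or> ?s (mrk C d) = d" using assms by (simp add: rc_wf_def)
  have ne: "?s (?s (?s d)) \<noteq> ?s d" using o4 by metis
  show ?thesis
  proof (cases "mrk C d = ?s d")
    case True
    then show ?thesis using ne by (simp add: mrk'_def rc_dual_def)
  next
    case False
    hence "?s (mrk C d) = d" using m by auto
    have dd: "?s (?s d) \<in> darts C" using assms by (simp add: rc_wf_def)
    have "mrk C (?s (?s (?s (?s d)))) = ?s (?s (mrk C (?s (?s d))))"
      using assms(1) dd by (simp add: rc_wf_def)
    moreover have "mrk C (?s (?s d)) = ?s (?s (mrk C d))" using assms by (simp add: rc_wf_def)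
    ultimately have "mrk C d = ?s (?s (?s d))" using o4 \<open>?s (mrk C d) = d\<close> by simp
    then show ?thesis using False ne by (simp add: mrk'_def rc_dual_def)
  qed
qed

lemma step_rel_cong: "(\<And>x. x \<in> D \<Longrightarrow> f x = g x) \<Longrightarrow> step_rel D f = step_rel D g"
  unfolding step_rel_def by auto

lemma end_dual: "rc_wf C \<Longrightarrow> end_circles (rc_dual C) = start_circles C"
proof -
  assume w: "rc_wf C"
  have "step_rel (darts C) (mrk' (rc_dual C)) = step_rel (darts C) (mrk C)"
    by (rule step_rel_cong) (simp add: mrk'_dual[OF w])
  thus ?thesis
    unfolding end_circles_def start_circles_def end_circle_def start_circle_def
    by (simp add: rc_dual_def)
qed

lemma filt_ne:
  assumes "filtration F C" "a \<subseteq> start_circles C" "b \<subseteq> end_circles C" "a \<noteq> {}" "F C a b"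
  shows "b \<noteq> {}"
proof -
  obtain c where "c \<in> a" using assms(4) by blast
  then obtain d where d: "d \<in> darts C" "c = start_circle C d"
    using assms(2) unfolding start_circles_def by blast
  hence "end_circle C d \<in> b" using assms \<open>c \<in> a\<close> unfolding filtration_def by blast
  thus ?thesis by blast
qed

lemma filt_all:
  assumes "filtration F C" "b \<subseteq> end_circles C" "F C (start_circles C) b"
  shows "b = end_circles C"
proof -
  have "end_circles C \<subseteq> b"
  proof
    fix e assume "e \<in> end_circles C"
    then obtain d where d: "d \<in> darts C" "e = end_circle C d" unfolding end_circles_def by blast
    have "start_circle C d \<in> start_circles C" using d unfolding start_circles_def by blast
    thus "e \<in> b" using assms d unfolding filtration_def by blast
  qed
  thus ?thesis using assms(2) by blast
qed

theorem lemma3p3: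
  fixes F :: assoc_maps and C :: rc and p :: int
  assumes "is_tree C \<or> is_dual_tree C"
    and "has_bidegree F C p"
    and "naturality F C"
    and "filtration F C"
    and "duality F C"
    and "nonzero_map F C"
  shows "(p = 2 * int (dim C) \<longrightarrow>
            (is_tree C \<longrightarrow> (\<forall>a \<subseteq> start_circles C. \<forall>b \<subseteq> end_circles C.
                F C a b \<longleftrightarrow> (a = start_circles C \<and> b = end_circles C))) \<and>
            (is_dual_tree C \<longrightarrow> (\<forall>a \<subseteq> start_circles C. \<forall>b \<subseteq> end_circles C.
                F C a b \<longleftrightarrow> (a = {} \<and> b = {}))))
       \<and> (p > 2 * int (dim C) \<longrightarrow> (\<forall>a \<subseteq> start_circles C. \<forall>b \<subseteq> end_circles C. \<not> F C a b))"
proof -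
  have w: "rc_wf C" using assms(1) by (auto simp: is_tree_def is_dual_tree_def rc_conf_def)
  have fs: "finite (start_circles C)" "finite (end_circles C)" using w fin_start fin_end by auto
  have deg: "\<And>a b. a \<subseteq> start_circles C \<Longrightarrow> b \<subseteq> end_circles C \<Longrightarrow> F C a b \<Longrightarrow>
      int (card (end_circles C)) - 2 * int (card b) + int (dim C)
        = int (card (start_circles C)) - 2 * int (card a) + p"
    using assms(2) unfolding has_bidegree_def gr0_def gr1_def by blast
  have cards: "\<And>a b. a \<subseteq> start_circles C \<Longrightarrow> b \<subseteq> end_circles C \<Longrightarrow>
      card a \<le> card (start_circles C) \<and> card b \<le> card (end_circles C)"
    using fs card_mono by blast
  have eqs: "\<And>a b. a \<subseteq> start_circles C \<Longrightarrow> b \<subseteq> end_circles C \<Longrightarrow>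
      (card a = card (start_circles C) \<longrightarrow> a = start_circles C) \<and>
      (card b = card (end_circles C) \<longrightarrow> b = end_circles C)"
    using fs card_subset_eq by blast
  have emp: "\<And>a b. a \<subseteq> start_circles C \<Longrightarrow> b \<subseteq> end_circles C \<Longrightarrow>
      (card a = 0 \<longleftrightarrow> a = {}) \<and> (card b = 0 \<longleftrightarrow> b = {})"
    using fs by (meson card_0_eq finite_subset)
  have tree_case: "\<And>a b. is_tree C \<Longrightarrow> a \<subseteq> start_circles C \<Longrightarrow> b \<subseteq> end_circles C \<Longrightarrow> F C a b \<Longrightarrow>
        p \<ge> 2 * int (dim C) \<Longrightarrow> p = 2 * int (dim C) \<and> a = start_circles C \<and> b = end_circles C"
  proof -
    fix a b assume t: "is_tree C" and ab: "a \<subseteq> start_circles C" "b \<subseteq> end_circles C" "F C a b"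
      and pp: "p \<ge> 2 * int (dim C)"
    have cs: "card (start_circles C) = dim C + 1" "card (end_circles C) = 1"
      using t by (auto simp: is_tree_def)
    have "darts C \<noteq> {}" using cs(2) unfolding end_circles_def by auto
    hence d1: "dim C \<ge> 1" using dim_pos w by blast
    have e: "p = 2 * int (card a) - 2 * int (card b)"
      using deg[OF ab] cs by simp
    have c: "card a \<le> dim C + 1" "card b \<le> 1" using cards[OF ab(1,2)] cs by auto
    have "card a \<noteq> 0" using e c pp d1 by linarith
    hence "a \<noteq> {}" by auto
    hence "b \<noteq> {}" using filt_ne[OF assms(4) ab(1,2) _ ab(3)] by blast
    hence "card b = 1" using c emp[OF ab(1,2)] by auto
    hence "card a = dim C + 1" "p = 2 * int (dim C)" using e c pp by linarith+
    thus "p = 2 * int (dim C) \<and> a = start_circles C \<and> b = end_circles C"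
      using eqs[OF ab(1,2)] cs \<open>card b = 1\<close> by auto
  qed
  have dual_case: "\<And>a b. is_dual_tree C \<Longrightarrow> a \<subseteq> start_circles C \<Longrightarrow> b \<subseteq> end_circles C \<Longrightarrow> F C a b \<Longrightarrow>
        p \<ge> 2 * int (dim C) \<Longrightarrow> p = 2 * int (dim C) \<and> a = {} \<and> b = {}"
  proof -
    fix a b assume t: "is_dual_tree C" and ab: "a \<subseteq> start_circles C" "b \<subseteq> end_circles C" "F C a b"
      and pp: "p \<ge> 2 * int (dim C)"
    have tt: "is_tree (rc_dual C)" using t by (simp add: is_dual_tree_def)
    have dd: "dim (rc_dual C) = dim C" "start_circles (rc_dual C) = end_circles C"
      by (simp_all add: dim_def rc_dual_def start_circles_def end_circles_def
          start_circle_def end_circle_def)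
    have cs: "card (end_circles C) = dim C + 1" "card (start_circles C) = 1"
      using tt dd end_dual[OF w] by (auto simp: is_tree_def)
    have "darts C \<noteq> {}" using cs(2) unfolding start_circles_def by auto
    hence d1: "dim C \<ge> 1" using dim_pos w by blast
    have e: "int (dim C) + int (dim C) + 2 * int (card a) = 2 * int (card b) + p"
      using deg[OF ab] cs by simp
    have c: "card a \<le> 1" "card b \<le> dim C + 1" using cards[OF ab(1,2)] cs by auto
    have "card a = 0"
    proof (rule ccontr)
      assume "card a \<noteq> 0"
      hence "card a = 1" using c by auto
      hence "a = start_circles C" using eqs[OF ab(1,2)] cs by auto
      hence "b = end_circles C" using filt_all[OF assms(4) ab(2)] ab(3) by blast
      hence "card b = dim C + 1" using cs by simp
      thus False using e pp d1 \<open>card a = 1\<close> by linarith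
    qed
    hence "card b = 0" "p = 2 * int (dim C)" using e pp by linarith+
    thus "p = 2 * int (dim C) \<and> a = {} \<and> b = {}" using emp[OF ab(1,2)] \<open>card a = 0\<close> by auto
  qed
  obtain a0 b0 where ab0: "a0 \<subseteq> start_circles C" "b0 \<subseteq> end_circles C" "F C a0 b0"
    using assms(6) unfolding nonzero_map_def by blast
  have A: "p = 2 * int (dim C) \<longrightarrow> is_tree C \<longrightarrow> (\<forall>a \<subseteq> start_circles C. \<forall>b \<subseteq> end_circles C.
                F C a b \<longleftrightarrow> (a = start_circles C \<and> b = end_circles C))"
  proof (intro impI allI)
    fix a b assume h: "p = 2 * int (dim C)" "is_tree C" "a \<subseteq> start_circles C" "b \<subseteq> end_circles C"
    have "a0 = start_circles C \<and> b0 = end_circles C" using tree_case[OF h(2) ab0] h(1) by simp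
    then show "F C a b \<longleftrightarrow> (a = start_circles C \<and> b = end_circles C)"
      using tree_case[OF h(2) h(3) h(4)] h(1) ab0(3) by auto
  qed
  have B: "p = 2 * int (dim C) \<longrightarrow> is_dual_tree C \<longrightarrow> (\<forall>a \<subseteq> start_circles C. \<forall>b \<subseteq> end_circles C.
                F C a b \<longleftrightarrow> (a = {} \<and> b = {}))"
  proof (intro impI allI)
    fix a b assume h: "p = 2 * int (dim C)" "is_dual_tree C" "a \<subseteq> start_circles C" "b \<subseteq> end_circles C"
    have "a0 = {} \<and> b0 = {}" using dual_case[OF h(2) ab0] h(1) by simp
    then show "F C a b \<longleftrightarrow> (a = {} \<and> b = {})"
      using dual_case[OF h(2) h(3) h(4)] h(1) ab0(3) by auto
  qed
  have D: "p > 2 * int (dim C) \<longrightarrow> (\<forall>a \<subseteq> start_circles C. \<forall>b \<subseteq> end_circles C. \<not> F C a b)"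
  proof (intro impI allI notI)
    fix a b assume h: "p > 2 * int (dim C)" "a \<subseteq> start_circles C" "b \<subseteq> end_circles C" "F C a b"
    show False
      using assms(1) tree_case[OF _ h(2,3,4)] dual_case[OF _ h(2,3,4)] h(1) by force
  qed
  show ?thesis using A B D by blast
qed

end
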